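(* Let $m\in\{1,2\}$, $K>0$, $\gamma=3$, and let $(\rho,u)$ be a smooth solution ($\rho>0$, $r>0$) of the radially symmetric isentropic Euler equations $$(r^m\rho)_t+(r^m\rho u)_r=0,\qquad (r^m\rho u)_t+(r^m\rho u^2)_r+r^m p_r=0,\qquad p=K\rho^\gamma,$$ in the supersonic expanding regime $0<c_1<c_2$. Then: (i) If the 1-wave is rarefaction (R), the 2-wave can only change from compression (C) to rarefaction (R); if the 2-wave is rarefaction, the 1-wave can only change from C to R. (ii) If the 1-wave is compression (C), the 2-wave can only change from R to C; if the 2-wave is compression, the 1-wave can only change from R to C.
   Context: Here $h=\sqrt{K\gamma}\,\rho^{(\gamma-1)/2}$, $c_1=u-h$, $c_2=u+h$, and the gradient variables are $$\alpha=u_r+\tfrac{2}{\gamma-1}h_r+\tfrac{m}{r}\tfrac{hu}{c_2},\qquad \beta=u_r-\tfrac{2}{\gamma-1}h_r-\tfrac{m}{r}\tfrac{hu}{c_1}.$$ The solution is called 1-rarefaction (1-compression) at a point if $\beta>0$ ($\beta<0$) there, and 2-rarefaction (2-compression) if $\alpha>0$ ($\alpha<0$). Characteristic flow maps: $\partial_t\xi(r_0,t)=c_1(\xi(r_0,t),t)$, $\partial_t\psi(r_0,t)=c_2(\psi(r_0,t),t)$, $\xi(r_0,0)=\psi(r_0,0)=r_0$. "The 2-wave changes from R to C" means: there are $r_0$, $t^*$ and $\varepsilon>0$ such that, writing $g(t)=\alpha(\psi(r_0,t),t)$, we have $g(t^* )=0$, $g>0$ on $(t^*-\varepsilon,t^*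 )$ and $g<0$ on $(t^*,t^*+\varepsilon)$ (change from C to R: the reverse signs); the statement "if the 1-wave is R then the 2-wave can only change from C to R" means no R-to-C change of the 2-wave occurs at a time $t^*$ with $\beta(\psi(r_0,t^* ),t^* )>0$. The analogous statements for the 1-wave use $\beta$ along $\xi(r_0,\cdot)$, and with the roles of R/C (signs) of the other wave exchanged accordingly. *)

theory Defs
  imports "HOL-Analysis.Analysis"
begin

text \<open>Functions of (r,t) are modelled as functions on real \<times> real.
  C^k regularity on a set, via continuous partial derivatives.\<close>

primrec Ck_on :: "nat \<Rightarrow> (real \<times> real) set \<Rightarrow> (real \<times> real \<Rightarrow> real) \<Rightarrow> bool" where
  "Ck_on 0 \<Omega> f = continuous_on \<Omega> f"
| "Ck_on (Suc k) \<Omega> f =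
     (\<exists>fr ft. (\<forall>z\<in>\<Omega>. (f has_derivative (\<lambda>(dr, dt). fr z * dr + ft z * dt)) (at z))
              \<and> Ck_on k \<Omega> fr \<and> Ck_on k \<Omega> ft)"

definition smooth_on2 :: "(real \<times> real) set \<Rightarrow> (real \<times> real \<Rightarrow> real) \<Rightarrow> bool" where
  "smooth_on2 \<Omega> f \<longleftrightarrow> (\<forall>k. Ck_on k \<Omega> f)"

definition pd_r :: "(real \<times> real \<Rightarrow> real) \<Rightarrow> real \<times> real \<Rightarrow> real" where
  "pd_r f z = deriv (\<lambda>s. f (s, snd z)) (fst z)"

definition pd_t :: "(real \<times> real \<Rightarrow> real) \<Rightarrow> real \<times> real \<Rightarrow> real" where
  "pd_t f z = deriv (\<lambda>s. f (fst z, s)) (snd z)"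

definition hsp :: "real \<Rightarrow> real \<Rightarrow> (real \<times> real \<Rightarrow> real) \<Rightarrow> real \<times> real \<Rightarrow> real" where
  "hsp K \<gamma> \<rho> z = sqrt (K * \<gamma>) * \<rho> z powr ((\<gamma> - 1) / 2)"

definition c1 :: "real \<Rightarrow> real \<Rightarrow> (real \<times> real \<Rightarrow> real) \<Rightarrow> (real \<times> real \<Rightarrow> real) \<Rightarrow> real \<times> real \<Rightarrow> real" where
  "c1 K \<gamma> \<rho> u z = u z - hsp K \<gamma> \<rho> z"

definition c2 :: "real \<Rightarrow> real \<Rightarrow> (real \<times> real \<Rightarrow> real) \<Rightarrow> (real \<times> real \<Rightarrow> real) \<Rightarrow> real \<times> real \<Rightarrow> real" where
  "c2 K \<gamma> \<rho> u z = u z + hsp K \<gamma> \<rho> z"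

definition alpha :: "real \<Rightarrow> real \<Rightarrow> real \<Rightarrow> (real \<times> real \<Rightarrow> real) \<Rightarrow> (real \<times> real \<Rightarrow> real) \<Rightarrow> real \<times> real \<Rightarrow> real" where
  "alpha m K \<gamma> \<rho> u z = pd_r u z + 2 / (\<gamma> - 1) * pd_r (hsp K \<gamma> \<rho>) z
      + m / fst z * (hsp K \<gamma> \<rho> z * u z / c2 K \<gamma> \<rho> u z)"

definition beta :: "real \<Rightarrow> real \<Rightarrow> real \<Rightarrow> (real \<times> real \<Rightarrow> real) \<Rightarrow> (real \<times> real \<Rightarrow> real) \<Rightarrow> real \<times> real \<Rightarrow> real" where
  "beta m K \<gamma> \<rho> u z = pd_r u z - 2 / (\<gamma> - 1) * pd_r (hsp K \<gamma> \<rho>) z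
      - m / fst z * (hsp K \<gamma> \<rho> z * u z / c1 K \<gamma> \<rho> u z)"

definition euler_solution ::
  "real \<Rightarrow> real \<Rightarrow> real \<Rightarrow> (real \<times> real) set \<Rightarrow> (real \<times> real \<Rightarrow> real) \<Rightarrow> (real \<times> real \<Rightarrow> real) \<Rightarrow> bool" where
  "euler_solution m K \<gamma> \<Omega> \<rho> u \<longleftrightarrow>
     open \<Omega> \<and> (\<forall>z\<in>\<Omega>. fst z > 0) \<and> smooth_on2 \<Omega> \<rho> \<and> smooth_on2 \<Omega> u \<and>
     (\<forall>z\<in>\<Omega>. \<rho> z > 0) \<and>
     (\<forall>z\<in>\<Omega>. pd_t (\<lambda>w. fst w powr m * \<rho> w) z + pd_r (\<lambda>w. fst w powr m * \<rho> w * u w) z = 0) \<and>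
     (\<forall>z\<in>\<Omega>. pd_t (\<lambda>w. fst w powr m * \<rho> w * u w) z
               + pd_r (\<lambda>w. fst w powr m * \<rho> w * (u w)\<^sup>2) z
               + fst z powr m * pd_r (\<lambda>w. K * \<rho> w powr \<gamma>) z = 0) \<and>
     (\<forall>z\<in>\<Omega>. 0 < c1 K \<gamma> \<rho> u z \<and> c1 K \<gamma> \<rho> u z < c2 K \<gamma> \<rho> u z)"

text \<open>The characteristic t \<mapsto> \<psi>(r0,t) (resp. \<xi>(r0,t)) on the time interval J (containing 0):
  an integral curve of the speed c staying in \<Omega> with initial value r0.\<close>
definition char_curve ::
  "(real \<times> real) set \<Rightarrow> (real \<times> real \<Rightarrow> real) \<Rightarrow> real set \<Rightarrow> real \<Rightarrow> (real \<Rightarrow> real) \<Rightarrow> bool" where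
  "char_curve \<Omega> c J r0 x \<longleftrightarrow> is_interval J \<and> 0 \<in> J \<and> x 0 = r0 \<and>
     (\<forall>t\<in>J. (x t, t) \<in> \<Omega> \<and> (x has_real_derivative c (x t, t)) (at t within J))"

definition changes_R_to_C :: "(real \<Rightarrow> real) \<Rightarrow> real \<Rightarrow> real \<Rightarrow> bool" where
  "changes_R_to_C g ts \<epsilon> \<longleftrightarrow> \<epsilon> > 0 \<and> g ts = 0 \<and>
     (\<forall>t\<in>{ts - \<epsilon><..<ts}. g t > 0) \<and> (\<forall>t\<in>{ts<..<ts + \<epsilon>}. g t < 0)"

definition changes_C_to_R :: "(real \<Rightarrow> real) \<Rightarrow> real \<Rightarrow> real \<Rightarrow> bool" where
  "changes_C_to_R g ts \<epsilon> \<longleftrightarrow> \<epsilon> > 0 \<and> g ts = 0 \<and>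
     (\<forall>t\<in>{ts - \<epsilon><..<ts}. g t < 0) \<and> (\<forall>t\<in>{ts<..<ts + \<epsilon>}. g t > 0)"

end

theory Submission
  imports Defs
begin


definition D2 :: "(real \<times> real \<Rightarrow> real) \<Rightarrow> real \<times> real \<Rightarrow> real \<Rightarrow> real \<Rightarrow> bool" where
  "D2 f z a b \<longleftrightarrow> (f has_derivative (\<lambda>(dr, dt). a * dr + b * dt)) (at z)"

lemma D2_curve:
  assumes "D2 f (x t, t) a b" and "(x has_real_derivative p) (at t within J)"
  shows "((\<lambda>t. f (x t, t)) has_real_derivative (a * p + b)) (at t within J)"
proof -
  have 1: "((\<lambda>t. (x t, t)) has_derivative (\<lambda>h. (h * p, h))) (at t within J)"
  proof -
    have e: "(\<lambda>h. h * p) = (*) p" by (auto simp: fun_eq_iff)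
    show ?thesis
    using assms(2) unfolding has_field_derivative_def e[symmetric]
    by (intro has_derivative_Pair) (auto intro: has_derivative_ident)
  qed
  have "((\<lambda>t. f (x t, t)) has_derivative (\<lambda>h. (\<lambda>(dr, dt). a * dr + b * dt) (h * p, h))) (at t within J)"
    using has_derivative_compose[OF 1 assms(1)[unfolded D2_def]] by simp
  moreover have "(\<lambda>h. (\<lambda>(dr, dt). a * dr + b * dt) (h * p, h)) = (*) (a * p + b)"
    by (auto simp: algebra_simps)
  ultimately show ?thesis unfolding has_field_derivative_def by simp
qed

lemma D2_r:
  assumes "D2 f z a b"
  shows "((\<lambda>s. f (s, snd z)) has_real_derivative a) (at (fst z))"
proof -
  obtain z1 z2 where zz: "z = (z1, z2)" by fastforce
  have 1: "((\<lambda>s. (s, snd z)) has_derivative (\<lambda>h. (h, 0))) (at (fst z))"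
    by (intro has_derivative_Pair) (auto intro: has_derivative_ident)
  have e: "(\<lambda>h. (\<lambda>(dr, dt). a * dr + b * dt) (h, 0::real)) = (*) a"
    by (auto simp: algebra_simps)
  have "((\<lambda>s. f (s, snd z)) has_derivative (\<lambda>h. (\<lambda>(dr, dt). a * dr + b * dt) (h, 0::real))) (at (fst z))"
    by (rule has_derivative_compose[OF 1]) (use assms zz in \<open>simp add: D2_def\<close>)
  then show ?thesis unfolding has_field_derivative_def e .
qed

lemma D2_t:
  assumes "D2 f z a b"
  shows "((\<lambda>s. f (fst z, s)) has_real_derivative b) (at (snd z))"
proof -
  obtain z1 z2 where zz: "z = (z1, z2)" by fastforce
  have 1: "((\<lambda>s. (fst z, s)) has_derivative (\<lambda>h. (0, h))) (at (snd z))"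
    by (intro has_derivative_Pair) (auto intro: has_derivative_ident)
  have e: "(\<lambda>h. (\<lambda>(dr, dt). a * dr + b * dt) (0::real, h)) = (*) b"
    by (auto simp: algebra_simps)
  have "((\<lambda>s. f (fst z, s)) has_derivative (\<lambda>h. (\<lambda>(dr, dt). a * dr + b * dt) (0::real, h))) (at (snd z))"
    by (rule has_derivative_compose[OF 1]) (use assms zz in \<open>simp add: D2_def\<close>)
  then show ?thesis unfolding has_field_derivative_def e .
qed

lemma D2_pd:
  assumes "D2 f z a b"
  shows "pd_r f z = a" "pd_t f z = b"
proof -
  show "pd_r f z = a" unfolding pd_r_def by (rule DERIV_imp_deriv[OF D2_r[OF assms]])
  show "pd_t f z = b" unfolding pd_t_def by (rule DERIV_imp_deriv[OF D2_t[OF assms]])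
qed

lemma Ck_on_cong:
  assumes "open \<Omega>" 
  shows "Ck_on k \<Omega> f \<Longrightarrow> (\<And>z. z \<in> \<Omega> \<Longrightarrow> f z = g z) \<Longrightarrow> Ck_on k \<Omega> g"
proof (cases k)
  case 0
  assume "Ck_on k \<Omega> f" "\<And>z. z \<in> \<Omega> \<Longrightarrow> f z = g z"
  then show ?thesis using continuous_on_cong[of \<Omega> \<Omega> f g] 0 by simp
next
  case (Suc k')
  assume p: "Ck_on k \<Omega> f" "\<And>z. z \<in> \<Omega> \<Longrightarrow> f z = g z"
  from p(1) have "\<exists>fr ft. (\<forall>z\<in>\<Omega>. (f has_derivative (\<lambda>(dr, dt). fr z * dr + ft z * dt)) (at z))
     \<and> Ck_on k' \<Omega> fr \<and> Ck_on k' \<Omega> ft" using Suc by simp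
  then obtain fr ft where h: "\<forall>z\<in>\<Omega>. (f has_derivative (\<lambda>(dr, dt). fr z * dr + ft z * dt)) (at z)"
     "Ck_on k' \<Omega> fr" "Ck_on k' \<Omega> ft" by (elim exE conjE)
  have "(g has_derivative (\<lambda>(dr, dt). fr z * dr + ft z * dt)) (at z)" if "z \<in> \<Omega>" for z
    using has_derivative_transform_within_open[OF h(1)[rule_format, OF that] assms that p(2)] .
  then show ?thesis unfolding Suc Ck_on.simps
    by (intro exI[of _ fr] exI[of _ ft] conjI ballI h(2,3))
qed

lemma Ck_on_Suc_D:
  assumes "Ck_on (Suc k) \<Omega> f"
  obtains fr ft where "\<forall>z\<in>\<Omega>. D2 f z (fr z) (ft z)" "Ck_on k \<Omega> fr" "Ck_on k \<Omega> ft"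
proof -
  from assms have "\<exists>fr ft. (\<forall>z\<in>\<Omega>. (f has_derivative (\<lambda>(dr, dt). fr z * dr + ft z * dt)) (at z))
     \<and> Ck_on k \<Omega> fr \<and> Ck_on k \<Omega> ft" by simp
  then obtain fr ft where h: "\<forall>z\<in>\<Omega>. (f has_derivative (\<lambda>(dr, dt). fr z * dr + ft z * dt)) (at z)"
     "Ck_on k \<Omega> fr" "Ck_on k \<Omega> ft" by (elim exE conjE)
  show ?thesis by (rule that[of fr ft]) (use h in \<open>auto simp: D2_def\<close>)
qed

lemma smooth_D2:
  assumes "smooth_on2 \<Omega> f" "open \<Omega>" "z \<in> \<Omega>"
  shows "D2 f z (pd_r f z) (pd_t f z)"
proof -
  have "Ck_on (Suc 0) \<Omega> f" using assms(1) unfolding smooth_on2_def by blast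
  then obtain fr ft where "\<forall>z\<in>\<Omega>. D2 f z (fr z) (ft z)" by (rule Ck_on_Suc_D)
  then have d: "D2 f z (fr z) (ft z)" using assms(3) by blast
  then show ?thesis using D2_pd[OF d] by simp
qed

lemma smooth_pd:
  assumes "smooth_on2 \<Omega> f" "open \<Omega>"
  shows "smooth_on2 \<Omega> (pd_r f)" "smooth_on2 \<Omega> (pd_t f)"
proof -
  have "Ck_on k \<Omega> (pd_r f) \<and> Ck_on k \<Omega> (pd_t f)" for k
  proof -
    have "Ck_on (Suc k) \<Omega> f" using assms(1) unfolding smooth_on2_def by blast
    then obtain fr ft where h: "\<forall>z\<in>\<Omega>. D2 f z (fr z) (ft z)" "Ck_on k \<Omega> fr" "Ck_on k \<Omega> ft"
      by (rule Ck_on_Suc_D)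
    have "\<And>z. z \<in> \<Omega> \<Longrightarrow> fr z = pd_r f z" "\<And>z. z \<in> \<Omega> \<Longrightarrow> ft z = pd_t f z"
      using h(1) D2_pd by (metis)+
    then show ?thesis using Ck_on_cong[OF assms(2), of k fr "pd_r f"] Ck_on_cong[OF assms(2), of k ft "pd_t f"] h(2,3) by simp
  qed
  then show "smooth_on2 \<Omega> (pd_r f)" "smooth_on2 \<Omega> (pd_t f)" unfolding smooth_on2_def by auto
qed

lemma smooth_cont:
  assumes "smooth_on2 \<Omega> f"
  shows "continuous_on \<Omega> f"
proof -
  have "Ck_on 0 \<Omega> f" using assms unfolding smooth_on2_def by blast
  then show ?thesis by simp
qed

lemma smooth_isCont:
  assumes "smooth_on2 \<Omega> f" "open \<Omega>" "z \<in> \<Omega>"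
  shows "isCont f z"
  using smooth_cont[OF assms(1)] assms(2,3) continuous_on_eq_continuous_at by blast



lemma sq_dist:
  fixes a b x y h :: real
  assumes "a \<le> x" "x \<le> a + h" "b \<le> y" "y \<le> b + h"
  shows "dist (x, y) (a, b) \<le> 2 * h"
proof -
  have "dist (x, y) (a, b) = sqrt ((x - a)^2 + (y - b)^2)"
    by (simp add: dist_Pair_Pair dist_real_def)
  also have "\<dots> \<le> \<bar>x - a\<bar> + \<bar>y - b\<bar>" by (rule sqrt_sum_squares_le_sum_abs)
  also have "\<dots> \<le> 2 * h" using assms by auto
  finally show ?thesis .
qed

lemma clairaut:
  fixes f fr ft frt ftr :: "real \<times> real \<Rightarrow> real"
  assumes "open \<Omega>" "(a, b) \<in> \<Omega>"
  and fr: "\<And>x y. (x, y) \<in> \<Omega> \<Longrightarrow> ((\<lambda>s. f (s, y)) has_real_derivative fr (x, y)) (at x)"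
  and ft: "\<And>x y. (x, y) \<in> \<Omega> \<Longrightarrow> ((\<lambda>s. f (x, s)) has_real_derivative ft (x, y)) (at y)"
  and frt: "\<And>x y. (x, y) \<in> \<Omega> \<Longrightarrow> ((\<lambda>s. fr (x, s)) has_real_derivative frt (x, y)) (at y)"
  and ftr: "\<And>x y. (x, y) \<in> \<Omega> \<Longrightarrow> ((\<lambda>s. ft (s, y)) has_real_derivative ftr (x, y)) (at x)"
  and c1: "isCont frt (a, b)" and c2: "isCont ftr (a, b)"
  shows "frt (a, b) = ftr (a, b)"
proof (rule ccontr)
  assume ne: "frt (a, b) \<noteq> ftr (a, b)"
  define e where "e = \<bar>frt (a, b) - ftr (a, b)\<bar> / 2"
  have e: "e > 0" using ne by (simp add: e_def)
  obtain d1 where d1: "d1 > 0" "\<And>p. dist p (a, b) < d1 \<Longrightarrow> dist (frt p) (frt (a, b)) < e"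
    using c1 e unfolding continuous_at_eps_delta by blast
  obtain d2 where d2: "d2 > 0" "\<And>p. dist p (a, b) < d2 \<Longrightarrow> dist (ftr p) (ftr (a, b)) < e"
    using c2 e unfolding continuous_at_eps_delta by blast
  obtain d0 where d0: "d0 > 0" "ball (a, b) d0 \<subseteq> \<Omega>"
    using assms(1,2) open_contains_ball by blast
  define h where "h = min d0 (min d1 d2) / 3"
  have h: "h > 0" using d0 d1 d2 by (simp add: h_def)
  have inO: "(x, y) \<in> \<Omega>" and nd1: "dist (x, y) (a, b) < d1" and nd2: "dist (x, y) (a, b) < d2"
    if "a \<le> x" "x \<le> a + h" "b \<le> y" "y \<le> b + h" for x y
  proof -
    have "dist (x, y) (a, b) \<le> 2 * h" using sq_dist that by blast
    moreover have "2 * h < d0" "2 * h < d1" "2 * h < d2" using h d0 d1 d2 by (auto simp: h_def)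
    ultimately show "(x, y) \<in> \<Omega>" "dist (x, y) (a, b) < d1" "dist (x, y) (a, b) < d2"
      using d0(2) by (auto simp: dist_commute)
  qed
  have ah: "a < a + h" "b < b + h" using h by auto
  obtain \<xi> where \<xi>: "a < \<xi>" "\<xi> < a + h"
    "(f (a + h, b + h) - f (a + h, b)) - (f (a, b + h) - f (a, b)) = h * (fr (\<xi>, b + h) - fr (\<xi>, b))"
  proof -
    have "((\<lambda>s. f (s, b + h) - f (s, b)) has_real_derivative fr (x, b + h) - fr (x, b)) (at x)"
      if "a \<le> x" "x \<le> a + h" for x
      using inO h that by (intro DERIV_diff fr) auto
    from MVT2[OF ah(1), of "\<lambda>s. f (s, b + h) - f (s, b)", OF this] show ?thesis
      using that by auto
  qed
  obtain \<eta> where \<eta>: "b < \<eta>" "\<eta> < b + h" "fr (\<xi>, b + h) - fr (\<xi>, b) = h * frt (\<xi>, \<eta>)"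
  proof -
    have "((\<lambda>s. fr (\<xi>, s)) has_real_derivative frt (\<xi>, y)) (at y)"
      if "b \<le> y" "y \<le> b + h" for y
      using inO h that \<xi> by (intro frt) auto
    from MVT2[OF ah(2), of "\<lambda>s. fr (\<xi>, s)", OF this] show ?thesis
      using that by auto
  qed
  obtain \<eta>' where \<eta>': "b < \<eta>'" "\<eta>' < b + h"
    "(f (a + h, b + h) - f (a, b + h)) - (f (a + h, b) - f (a, b)) = h * (ft (a + h, \<eta>') - ft (a, \<eta>'))"
  proof -
    have "((\<lambda>s. f (a + h, s) - f (a, s)) has_real_derivative ft (a + h, y) - ft (a, y)) (at y)"
      if "b \<le> y" "y \<le> b + h" for y
      using inO h that by (intro DERIV_diff ft) auto
    from MVT2[OF ah(2), of "\<lambda>s. f (a + h, s) - f (a, s)", OF this] show ?thesis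
      using that by auto
  qed
  obtain \<xi>' where \<xi>': "a < \<xi>'" "\<xi>' < a + h" "ft (a + h, \<eta>') - ft (a, \<eta>') = h * ftr (\<xi>', \<eta>')"
  proof -
    have "((\<lambda>s. ft (s, \<eta>')) has_real_derivative ftr (x, \<eta>')) (at x)"
      if "a \<le> x" "x \<le> a + h" for x
      using inO h that \<eta>' by (intro ftr) auto
    from MVT2[OF ah(1), of "\<lambda>s. ft (s, \<eta>')", OF this] show ?thesis
      using that by auto
  qed
  have "h * (h * frt (\<xi>, \<eta>)) = h * (h * ftr (\<xi>', \<eta>'))"
    using \<xi>(3) \<eta>(3) \<eta>'(3) \<xi>'(3) by (simp add: algebra_simps)
  then have eq: "frt (\<xi>, \<eta>) = ftr (\<xi>', \<eta>')" using h by simp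
  have "dist (frt (\<xi>, \<eta>)) (frt (a, b)) < e" using d1(2) nd1 \<xi> \<eta> by auto
  moreover have "dist (ftr (\<xi>', \<eta>')) (ftr (a, b)) < e" using d2(2) nd2 \<xi>' \<eta>' by auto
  ultimately have "\<bar>frt (a, b) - ftr (a, b)\<bar> < 2 * e" using eq by (simp add: dist_real_def)
  then show False by (simp add: e_def)
qed



lemma alg:
  fixes X P U Pr Ur Prr Urr Pt Ut Prt Urt DX DP DU DPr DUr c m :: real
  assumes X: "X \<noteq> 0" and c: "c \<noteq> 0" and w: "U + c * P \<noteq> 0" and z: "U - c * P \<noteq> 0"
  and A: "Ur + c * Pr + m / X * (c * P * U / (U + c * P)) = 0"
  and DX: "DX = U + c * P"
  and DP: "DP = Pr * DX + Pt" and DU: "DU = Ur * DX + Ut"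
  and DPr: "DPr = Prr * DX + Prt" and DUr: "DUr = Urr * DX + Urt"
  and Pt: "Pt = - (U * Pr + P * Ur + m * P * U / X)"
  and Ut: "Ut = - (U * Ur + c * c * P * Pr)"
  and Prt: "Prt = - (2 * Ur * Pr + U * Prr + P * Urr + m * (Pr * U + P * Ur) / X - m * P * U / X^2)"
  and Urt: "Urt = - (Ur * Ur + U * Urr + c * c * (Pr * Pr + P * Prr))"
  shows "DUr + c * DPr + ((0 * X - m * DX) / (X * X) * (c * P * U / (U + c * P)) +
     ((c * DP * U + DU * (c * P)) * (U + c * P) - c * P * U * (DU + c * DP)) /
     ((U + c * P) * (U + c * P)) * (m / X))
   = m * (U - c * P)^2 / (2 * X * (U + c * P)) * (Ur - c * Pr - m / X * (c * P * U / (U - c * P)))"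
proof -
  define W where "W = U + c * P"
  define Z where "Z = U - c * P"
  have W0: "W \<noteq> 0" and Z0: "Z \<noteq> 0" using w z by (auto simp: W_def Z_def)
  have UU: "U = (W + Z) / 2" and PP: "P = (W - Z) / (2 * c)" using c by (auto simp: W_def Z_def field_simps)
  have Ur: "Ur = - c * Pr - m / X * (c * P * U / W)" using A unfolding W_def by (simp add: algebra_simps)
  have cP: "c * P = (W - Z) / 2" using c PP by simp
  show ?thesis
    unfolding DUr DPr DP DU DX Pt Ut Prt Urt W_def[symmetric] Z_def[symmetric]
    unfolding Ur
    unfolding cP
    unfolding UU PP
    using X c W0 Z0
    apply (simp add: field_simps)
    apply (simp add: algebra_simps power2_eq_square)
    done
qed


lemma smooth_mixed:
  assumes "smooth_on2 \<Omega> f" "open \<Omega>" "z \<in> \<Omega>"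
  shows "pd_t (pd_r f) z = pd_r (pd_t f) z"
proof -
  obtain a b where z: "z = (a, b)" by fastforce
  have sr: "smooth_on2 \<Omega> (pd_r f)" and st: "smooth_on2 \<Omega> (pd_t f)" using smooth_pd assms(1,2) by blast+
  have "pd_t (pd_r f) (a, b) = pd_r (pd_t f) (a, b)"
  proof (rule clairaut[OF assms(2) assms(3)[unfolded z], where f=f and fr="pd_r f" and ft="pd_t f"])
    fix x y assume xy: "(x, y) \<in> \<Omega>"
    show "((\<lambda>s. f (s, y)) has_real_derivative pd_r f (x, y)) (at x)"
      using D2_r[OF smooth_D2[OF assms(1,2) xy]] by simp
    show "((\<lambda>s. f (x, s)) has_real_derivative pd_t f (x, y)) (at y)"
      using D2_t[OF smooth_D2[OF assms(1,2) xy]] by simp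
    show "((\<lambda>s. pd_r f (x, s)) has_real_derivative pd_t (pd_r f) (x, y)) (at y)"
      using D2_t[OF smooth_D2[OF sr assms(2) xy]] by simp
    show "((\<lambda>s. pd_t f (s, y)) has_real_derivative pd_r (pd_t f) (x, y)) (at x)"
      using D2_r[OF smooth_D2[OF st assms(2) xy]] by simp
  next
    show "isCont (pd_t (pd_r f)) (a, b)"
      using smooth_isCont[OF smooth_pd(2)[OF sr assms(2)] assms(2)] assms(3) z by simp
    show "isCont (pd_r (pd_t f)) (a, b)"
      using smooth_isCont[OF smooth_pd(1)[OF st assms(2)] assms(2)] assms(3) z by simp
  qed
  then show ?thesis using z by simp
qed

lemma open_slice:
  fixes \<Omega> :: "(real \<times> real) set"
  assumes "open \<Omega>"
  shows "open {s. (s, t) \<in> \<Omega>}"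
proof -
  have "{s. (s, t) \<in> \<Omega>} = (\<lambda>s. (s, t)) -` \<Omega>" by auto
  moreover have "open ((\<lambda>s. (s, t)) -` \<Omega>)"
    by (rule continuous_open_vimage[OF assms]) (intro continuous_intros)
  ultimately show ?thesis by simp
qed

lemma pr_at:
  assumes "smooth_on2 \<Omega> f" "open \<Omega>" "(r, t) \<in> \<Omega>"
  shows "((\<lambda>s. f (s, t)) has_real_derivative pd_r f (r, t)) (at r)"
  using D2_r[OF smooth_D2[OF assms]] by simp

lemma pt_at:
  assumes "smooth_on2 \<Omega> f" "open \<Omega>" "(r, t) \<in> \<Omega>"
  shows "((\<lambda>s. f (r, s)) has_real_derivative pd_t f (r, t)) (at t)"
  using D2_t[OF smooth_D2[OF assms]] by simp

lemma euler_nc: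
  fixes m K :: real
  assumes eu: "euler_solution m K 3 \<Omega> \<rho> u" and zO: "(r, t) \<in> \<Omega>"
  shows "pd_t \<rho> (r, t) + u (r, t) * pd_r \<rho> (r, t) + \<rho> (r, t) * pd_r u (r, t) + m * \<rho> (r, t) * u (r, t) / r = 0"
    and "pd_t u (r, t) + u (r, t) * pd_r u (r, t) + 3 * K * \<rho> (r, t) * pd_r \<rho> (r, t) = 0"
proof -
  have "\<forall>z\<in>\<Omega>. 0 < fst z" using eu unfolding euler_solution_def by blast
  then have rpos: "r > 0" using zO by force
  have op: "open \<Omega>" and sr: "smooth_on2 \<Omega> \<rho>" and su: "smooth_on2 \<Omega> u"
    and pos: "\<forall>z\<in>\<Omega>. \<rho> z > 0"
    and M: "pd_t (\<lambda>w. fst w powr m * \<rho> w) (r, t) + pd_r (\<lambda>w. fst w powr m * \<rho> w * u w) (r, t) = 0"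
    and N: "pd_t (\<lambda>w. fst w powr m * \<rho> w * u w) (r, t)
               + pd_r (\<lambda>w. fst w powr m * \<rho> w * (u w)\<^sup>2) (r, t)
               + fst (r, t) powr m * pd_r (\<lambda>w. K * \<rho> w powr 3) (r, t) = 0"
    using eu zO unfolding euler_solution_def by (auto simp del: fst_conv)
  define R where "R = r powr m"
  have R0: "R > 0" using rpos by (simp add: R_def)
  have Q: "r powr (m - 1) = R / r" using rpos by (simp add: R_def powr_diff)
  note pr = pr_at[OF sr op zO] and pt = pt_at[OF sr op zO]
  note ur = pr_at[OF su op zO] and ut = pt_at[OF su op zO]
  have pw: "((\<lambda>s. s powr m) has_real_derivative m * r powr (m - 1)) (at r)"
    using has_real_derivative_powr[OF rpos] .
  have T1: "pd_t (\<lambda>w. fst w powr m * \<rho> w) (r, t) = R * pd_t \<rho> (r, t)"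
    unfolding pd_t_def[of "\<lambda>w. fst w powr m * \<rho> w"] R_def by (simp add: DERIV_imp_deriv[OF DERIV_cmult[OF pt]])
  have T2: "pd_r (\<lambda>w. fst w powr m * \<rho> w * u w) (r, t)
     = ((m * r powr (m - 1)) * \<rho> (r, t) + pd_r \<rho> (r, t) * r powr m) * u (r, t) + pd_r u (r, t) * (r powr m * \<rho> (r, t))"
    unfolding pd_r_def[of "\<lambda>w. fst w powr m * \<rho> w * u w"] by (simp add: DERIV_imp_deriv[OF DERIV_mult[OF DERIV_mult[OF pw pr] ur]])
  have T3: "pd_t (\<lambda>w. fst w powr m * \<rho> w * u w) (r, t)
     = (R * pd_t \<rho> (r, t)) * u (r, t) + pd_t u (r, t) * (R * \<rho> (r, t))"
    unfolding pd_t_def[of "\<lambda>w. fst w powr m * \<rho> w * u w"] R_def by (simp add: DERIV_imp_deriv[OF DERIV_mult[OF DERIV_cmult[OF pt] ut]])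
  have T4: "pd_r (\<lambda>w. fst w powr m * \<rho> w * (u w)\<^sup>2) (r, t)
     = ((m * r powr (m - 1)) * \<rho> (r, t) + pd_r \<rho> (r, t) * r powr m) * (u (r, t))\<^sup>2
       + (of_nat 2 * (pd_r u (r, t) * u (r, t) ^ (2 - Suc 0))) * (r powr m * \<rho> (r, t))"
    unfolding pd_r_def[of "\<lambda>w. fst w powr m * \<rho> w * (u w)\<^sup>2"] by (simp add: DERIV_imp_deriv[OF DERIV_mult[OF DERIV_mult[OF pw pr] DERIV_power[OF ur, of 2]]])
  have T5: "pd_r (\<lambda>w. K * \<rho> w powr 3) (r, t) = K * (of_nat 3 * (pd_r \<rho> (r, t) * \<rho> (r, t) ^ (3 - Suc 0)))"
  proof -
    have d: "((\<lambda>s. K * \<rho> (s, t) ^ 3) has_real_derivative K * (of_nat 3 * (pd_r \<rho> (r, t) * \<rho> (r, t) ^ (3 - Suc 0)))) (at r)"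
      by (rule DERIV_cmult[OF DERIV_power[OF pr]])
    have "((\<lambda>s. K * \<rho> (s, t) powr 3) has_real_derivative K * (of_nat 3 * (pd_r \<rho> (r, t) * \<rho> (r, t) ^ (3 - Suc 0)))) (at r)"
    proof (rule has_field_derivative_transform_within_open[OF d open_slice[OF op]])
      show "r \<in> {s. (s, t) \<in> \<Omega>}" using zO by simp
      fix s assume "s \<in> {s. (s, t) \<in> \<Omega>}"
      then have "\<rho> (s, t) > 0" using pos by auto
      then show "K * \<rho> (s, t) ^ 3 = K * \<rho> (s, t) powr 3" by simp
    qed
    then show ?thesis unfolding pd_r_def[of "\<lambda>w. K * \<rho> w powr 3"] by (simp add: DERIV_imp_deriv)
  qed
  have M': "R * (pd_t \<rho> (r, t) + u (r, t) * pd_r \<rho> (r, t) + \<rho> (r, t) * pd_r u (r, t) + m * \<rho> (r, t) * u (r, t) / r) = 0"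
    using M unfolding T1 T2 Q R_def[symmetric] using rpos by (simp add: field_simps)
  then show E1: "pd_t \<rho> (r, t) + u (r, t) * pd_r \<rho> (r, t) + \<rho> (r, t) * pd_r u (r, t) + m * \<rho> (r, t) * u (r, t) / r = 0"
    using R0 by simp
  have "R * \<rho> (r, t) * (pd_t u (r, t) + u (r, t) * pd_r u (r, t) + 3 * K * \<rho> (r, t) * pd_r \<rho> (r, t))
     = (pd_t (\<lambda>w. fst w powr m * \<rho> w * u w) (r, t)
               + pd_r (\<lambda>w. fst w powr m * \<rho> w * (u w)\<^sup>2) (r, t)
               + fst (r, t) powr m * pd_r (\<lambda>w. K * \<rho> w powr 3) (r, t))
       - R * u (r, t) * (pd_t \<rho> (r, t) + u (r, t) * pd_r \<rho> (r, t) + \<rho> (r, t) * pd_r u (r, t) + m * \<rho> (r, t) * u (r, t) / r)"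
    unfolding T3 T4 T5 Q R_def[symmetric] using rpos
    by (simp add: field_simps power2_eq_square R_def[symmetric])
  then have "R * \<rho> (r, t) * (pd_t u (r, t) + u (r, t) * pd_r u (r, t) + 3 * K * \<rho> (r, t) * pd_r \<rho> (r, t)) = 0"
    using N E1 by simp
  then show "pd_t u (r, t) + u (r, t) * pd_r u (r, t) + 3 * K * \<rho> (r, t) * pd_r \<rho> (r, t) = 0"
    using R0 pos zO by auto
qed



lemma alg_e1:
  fixes a b c d p u m r :: real
  assumes "r \<noteq> 0"
  shows "- (a * b + c * u + (b * a + d * p) + ((m * b * u + a * (m * p)) * r - m * p * u * 1) / (r * r))
   = - (2 * a * b + u * c + p * d + m * (b * u + p * a) / r - m * p * u / r^2)"
  using assms by (simp add: field_simps power2_eq_square)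

lemma euler_r:
  fixes m K :: real
  assumes eu: "euler_solution m K 3 \<Omega> \<rho> u" and zO: "(r, t) \<in> \<Omega>"
  shows "pd_r (pd_t \<rho>) (r, t) = - (2 * pd_r u (r, t) * pd_r \<rho> (r, t) + u (r, t) * pd_r (pd_r \<rho>) (r, t)
           + \<rho> (r, t) * pd_r (pd_r u) (r, t) + m * (pd_r \<rho> (r, t) * u (r, t) + \<rho> (r, t) * pd_r u (r, t)) / r
           - m * \<rho> (r, t) * u (r, t) / r^2)"
    and "pd_r (pd_t u) (r, t) = - (pd_r u (r, t) * pd_r u (r, t) + u (r, t) * pd_r (pd_r u) (r, t)
           + 3 * K * (pd_r \<rho> (r, t) * pd_r \<rho> (r, t) + \<rho> (r, t) * pd_r (pd_r \<rho>) (r, t)))"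
proof -
  have fpos: "\<forall>z\<in>\<Omega>. 0 < fst z" and op: "open \<Omega>" and sr: "smooth_on2 \<Omega> \<rho>" and su: "smooth_on2 \<Omega> u"
    using eu unfolding euler_solution_def by blast+
  have rpos: "r > 0" using fpos zO by force
  have r0: "r \<noteq> 0" using rpos by simp
  define S where "S = {s. (s, t) \<in> \<Omega>}"
  have triv: "\<And>x. x \<in> S \<Longrightarrow> x \<in> S" by simp
  have S: "open S" "r \<in> S" using open_slice[OF op] zO by (auto simp: S_def)
  note pr = pr_at[OF sr op zO] and ur = pr_at[OF su op zO]
  note prr = pr_at[OF smooth_pd(1)[OF sr op] op zO] and urr = pr_at[OF smooth_pd(1)[OF su op] op zO]
  note ptr = pr_at[OF smooth_pd(2)[OF sr op] op zO] and utr = pr_at[OF smooth_pd(2)[OF su op] op zO]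
  note d1 = DERIV_minus[OF DERIV_add[OF DERIV_add[OF DERIV_mult[OF ur prr] DERIV_mult[OF pr urr]]
         DERIV_divide[OF DERIV_mult[OF DERIV_cmult[OF pr, of m] ur] DERIV_ident r0]]]
  have eq1: "- (u (s, t) * pd_r \<rho> (s, t) + \<rho> (s, t) * pd_r u (s, t) + m * \<rho> (s, t) * u (s, t) / s) = pd_t \<rho> (s, t)" if "s \<in> S" for s
  proof -
    have "(s, t) \<in> \<Omega>" using that by (simp add: S_def)
    from euler_nc(1)[OF eu this] show ?thesis by (simp add: algebra_simps)
  qed
  note d1' = has_field_derivative_transform_within_open[OF d1 S(1) S(2) eq1]
  note e1 = DERIV_unique[OF ptr d1']
  show "pd_r (pd_t \<rho>) (r, t) = - (2 * pd_r u (r, t) * pd_r \<rho> (r, t) + u (r, t) * pd_r (pd_r \<rho>) (r, t)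
           + \<rho> (r, t) * pd_r (pd_r u) (r, t) + m * (pd_r \<rho> (r, t) * u (r, t) + \<rho> (r, t) * pd_r u (r, t)) / r
           - m * \<rho> (r, t) * u (r, t) / r^2)"
    apply (subst e1) apply (rule triv, assumption) apply (rule alg_e1[OF r0]) done
  note d2 = DERIV_minus[OF DERIV_add[OF DERIV_mult[OF ur urr] DERIV_mult[OF DERIV_cmult[OF pr, of "3 * K"] prr]]]
  have eq2: "- (u (s, t) * pd_r u (s, t) + 3 * K * \<rho> (s, t) * pd_r \<rho> (s, t)) = pd_t u (s, t)" if "s \<in> S" for s
  proof -
    have "(s, t) \<in> \<Omega>" using that by (simp add: S_def)
    from euler_nc(2)[OF eu this] show ?thesis by (simp add: algebra_simps)
  qed
  note d2' = has_field_derivative_transform_within_open[OF d2 S(1) S(2) eq2]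
  note e2 = DERIV_unique[OF utr d2']
  show "pd_r (pd_t u) (r, t) = - (pd_r u (r, t) * pd_r u (r, t) + u (r, t) * pd_r (pd_r u) (r, t)
           + 3 * K * (pd_r \<rho> (r, t) * pd_r \<rho> (r, t) + \<rho> (r, t) * pd_r (pd_r \<rho>) (r, t)))"
    apply (subst e2) apply (rule triv, assumption) by (simp add: field_simps power2_eq_square)
qed



definition AA :: "real \<Rightarrow> real \<Rightarrow> (real \<times> real \<Rightarrow> real) \<Rightarrow> (real \<times> real \<Rightarrow> real) \<Rightarrow> real \<times> real \<Rightarrow> real" where
  "AA m c \<rho> u y = pd_r u y + c * pd_r \<rho> y + m / fst y * (c * \<rho> y * u y / (u y + c * \<rho> y))"

definition BB :: "real \<Rightarrow> real \<Rightarrow> (real \<times> real \<Rightarrow> real) \<Rightarrow> (real \<times> real \<Rightarrow> real) \<Rightarrow> real \<times> real \<Rightarrow> real" where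
  "BB m c \<rho> u y = pd_r u y - c * pd_r \<rho> y - m / fst y * (c * \<rho> y * u y / (u y - c * \<rho> y))"

lemma core:
  fixes m K c :: real and x :: "real \<Rightarrow> real"
  assumes eu: "euler_solution m K 3 \<Omega> \<rho> u" and cc: "c * c = 3 * K" and c0: "c \<noteq> 0"
  and zO: "(x ts, ts) \<in> \<Omega>"
  and w0: "u (x ts, ts) + c * \<rho> (x ts, ts) \<noteq> 0" and z0: "u (x ts, ts) - c * \<rho> (x ts, ts) \<noteq> 0"
  and dx: "(x has_real_derivative (u (x ts, ts) + c * \<rho> (x ts, ts))) (at ts)"
  and A0: "AA m c \<rho> u (x ts, ts) = 0"
  shows "((\<lambda>t. AA m c \<rho> u (x t, t)) has_real_derivative
     m * (u (x ts, ts) - c * \<rho> (x ts, ts))^2 / (2 * x ts * (u (x ts, ts) + c * \<rho> (x ts, ts)))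
       * BB m c \<rho> u (x ts, ts)) (at ts)"
proof -
  have fpos: "\<forall>z\<in>\<Omega>. 0 < fst z" and op: "open \<Omega>" and sr: "smooth_on2 \<Omega> \<rho>" and su: "smooth_on2 \<Omega> u"
    using eu unfolding euler_solution_def by blast+
  have X0: "x ts \<noteq> 0" using fpos zO by force
  note dUr = D2_curve[OF smooth_D2[OF smooth_pd(1)[OF su op] op zO] dx]
  note dPr = D2_curve[OF smooth_D2[OF smooth_pd(1)[OF sr op] op zO] dx]
  note dP = D2_curve[OF smooth_D2[OF sr op zO] dx]
  note dU = D2_curve[OF smooth_D2[OF su op zO] dx]
  note th = DERIV_add[OF DERIV_add[OF dUr DERIV_cmult[OF dPr, of c]] DERIV_mult[OF DERIV_divide[OF DERIV_const[of m] dx X0] DERIV_divide[OF DERIV_mult[OF DERIV_cmult[OF dP, of c] dU] DERIV_add[OF dU DERIV_cmult[OF dP, of c]] w0]]]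
  have A0': "pd_r u (x ts, ts) + c * pd_r \<rho> (x ts, ts) + m / x ts * (c * \<rho> (x ts, ts) * u (x ts, ts) / (u (x ts, ts) + c * \<rho> (x ts, ts))) = 0"
    using A0 by (simp add: AA_def)
  have Pt: "pd_t \<rho> (x ts, ts) = - (u (x ts, ts) * pd_r \<rho> (x ts, ts) + \<rho> (x ts, ts) * pd_r u (x ts, ts) + m * \<rho> (x ts, ts) * u (x ts, ts) / x ts)"
    using euler_nc(1)[OF eu zO] by (simp add: algebra_simps)
  have Ut: "pd_t u (x ts, ts) = - (u (x ts, ts) * pd_r u (x ts, ts) + c * c * \<rho> (x ts, ts) * pd_r \<rho> (x ts, ts))"
    using euler_nc(2)[OF eu zO] cc by (simp add: algebra_simps)
  have Prt: "pd_t (pd_r \<rho>) (x ts, ts) = - (2 * pd_r u (x ts, ts) * pd_r \<rho> (x ts, ts) + u (x ts, ts) * pd_r (pd_r \<rho>) (x ts, ts)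
           + \<rho> (x ts, ts) * pd_r (pd_r u) (x ts, ts) + m * (pd_r \<rho> (x ts, ts) * u (x ts, ts) + \<rho> (x ts, ts) * pd_r u (x ts, ts)) / x ts
           - m * \<rho> (x ts, ts) * u (x ts, ts) / (x ts)^2)"
    using smooth_mixed[OF sr op zO] euler_r(1)[OF eu zO] by simp
  have Urt: "pd_t (pd_r u) (x ts, ts) = - (pd_r u (x ts, ts) * pd_r u (x ts, ts) + u (x ts, ts) * pd_r (pd_r u) (x ts, ts)
           + c * c * (pd_r \<rho> (x ts, ts) * pd_r \<rho> (x ts, ts) + \<rho> (x ts, ts) * pd_r (pd_r \<rho>) (x ts, ts)))"
    using smooth_mixed[OF su op zO] euler_r(2)[OF eu zO] cc by simp
  note al = alg[OF X0 c0 w0 z0 A0' refl refl refl refl refl Pt Ut Prt Urt]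
  show ?thesis unfolding AA_def BB_def fst_conv
    by (rule DERIV_cong[OF th al])
qed



lemma hsp_eq:
  assumes eu: "euler_solution m K 3 \<Omega> \<rho> u" and yO: "y \<in> \<Omega>"
  shows "hsp K 3 \<rho> y = sqrt (K * 3) * \<rho> y"
proof -
  have "\<rho> y > 0" using eu yO unfolding euler_solution_def by blast
  then show ?thesis unfolding hsp_def by simp
qed

lemma hsp_pd:
  assumes eu: "euler_solution m K 3 \<Omega> \<rho> u" and yO: "(r, t) \<in> \<Omega>"
  shows "pd_r (hsp K 3 \<rho>) (r, t) = sqrt (K * 3) * pd_r \<rho> (r, t)"
proof -
  have op: "open \<Omega>" and sr: "smooth_on2 \<Omega> \<rho>"
    using eu unfolding euler_solution_def by blast+
  have "((\<lambda>s. hsp K 3 \<rho> (s, t)) has_real_derivative sqrt (K * 3) * pd_r \<rho> (r, t)) (at r)"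
  proof (rule has_field_derivative_transform_within_open[where f="\<lambda>s. sqrt (K * 3) * \<rho> (s, t)" and S="{s. (s, t) \<in> \<Omega>}"])
    show "((\<lambda>s. sqrt (K * 3) * \<rho> (s, t)) has_real_derivative sqrt (K * 3) * pd_r \<rho> (r, t)) (at r)"
      by (rule DERIV_cmult[OF pr_at[OF sr op yO]])
    show "open {s. (s, t) \<in> \<Omega>}" by (rule open_slice[OF op])
    show "r \<in> {s. (s, t) \<in> \<Omega>}" using yO by simp
    fix s assume "s \<in> {s. (s, t) \<in> \<Omega>}"
    then show "sqrt (K * 3) * \<rho> (s, t) = hsp K 3 \<rho> (s, t)" using hsp_eq[OF eu] by simp
  qed
  then show ?thesis unfolding pd_r_def[of "hsp K 3 \<rho>"] by (simp add: DERIV_imp_deriv)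
qed

lemma t1: "2 / (3 - 1) = (1::real)" by simp

lemma ab_aux1: fixes a b s k p q :: real shows
  "a + 2 / (3 - 1) * (s * b) + k * (s * p * q / (q + s * p)) = a + s * b + k * (s * p * q / (q + s * p))"
  by (simp only: t1 mult_1)
lemma ab_aux2: fixes a b s k p q :: real shows
  "a - 2 / (3 - 1) * (s * b) - k * (s * p * q / (q - s * p)) = a - s * b - k * (s * p * q / (q - s * p))"
  by (simp only: t1 mult_1)
lemma ab_aux3: fixes a b s k p q :: real shows
  "a - 2 / (3 - 1) * (s * b) - k * (s * p * q / (q - s * p)) = a + (- s) * b + k * ((- s) * p * q / (q + (- s) * p))"
  by (simp only: t1 mult_1 mult_minus_left mult_minus_right add_uminus_conv_diff minus_divide_left[symmetric])
lemma ab_aux4: fixes a b s k p q :: real shows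
  "a + 2 / (3 - 1) * (s * b) + k * (s * p * q / (q + s * p)) = a - (- s) * b - k * ((- s) * p * q / (q - (- s) * p))"
  by (simp only: t1 mult_1 mult_minus_left mult_minus_right diff_minus_eq_add minus_divide_left[symmetric])

lemma alpha_beta_eq:
  assumes eu: "euler_solution m K 3 \<Omega> \<rho> u" and yO: "y \<in> \<Omega>"
  shows "alpha m K 3 \<rho> u y = AA m (sqrt (K * 3)) \<rho> u y"
    and "beta m K 3 \<rho> u y = BB m (sqrt (K * 3)) \<rho> u y"
    and "beta m K 3 \<rho> u y = AA m (- sqrt (K * 3)) \<rho> u y"
    and "alpha m K 3 \<rho> u y = BB m (- sqrt (K * 3)) \<rho> u y"
proof -
  obtain r t where y: "y = (r, t)" by fastforce
  have h1: "hsp K 3 \<rho> (r, t) = sqrt (K * 3) * \<rho> (r, t)" using hsp_eq[OF eu yO] y by simp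
  have h2: "pd_r (hsp K 3 \<rho>) (r, t) = sqrt (K * 3) * pd_r \<rho> (r, t)" using hsp_pd[OF eu yO[unfolded y]] .
  show "alpha m K 3 \<rho> u y = AA m (sqrt (K * 3)) \<rho> u y"
    unfolding alpha_def AA_def c2_def y h1 h2 by (rule ab_aux1)
  show "beta m K 3 \<rho> u y = BB m (sqrt (K * 3)) \<rho> u y"
    unfolding beta_def BB_def c1_def y h1 h2 by (rule ab_aux2)
  show "beta m K 3 \<rho> u y = AA m (- sqrt (K * 3)) \<rho> u y"
    unfolding beta_def AA_def c1_def y h1 h2 by (rule ab_aux3)
  show "alpha m K 3 \<rho> u y = BB m (- sqrt (K * 3)) \<rho> u y"
    unfolding alpha_def BB_def c2_def y h1 h2 by (rule ab_aux4)
qed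

lemma no_RC:
  assumes d: "(g has_real_derivative l) (at ts)" and l: "l > 0" and ch: "changes_R_to_C g ts \<epsilon>"
  shows False
proof -
  have e: "\<epsilon> > 0" and g0: "g ts = 0" and neg: "\<forall>t\<in>{ts<..<ts + \<epsilon>}. g t < 0"
    using ch unfolding changes_R_to_C_def by auto
  obtain d where d: "d > 0" "\<forall>h>0. h < d \<longrightarrow> g ts < g (ts + h)"
    using DERIV_pos_inc_right[OF d l] by blast
  define h where "h = min d \<epsilon> / 2"
  have h: "h > 0" "h < d" "h < \<epsilon>" using d e by (auto simp: h_def)
  then have "g ts < g (ts + h)" using d by blast
  moreover have "g (ts + h) < 0" using neg h by auto
  ultimately show False using g0 by simp
qed

lemma no_CR:
  assumes d: "(g has_real_derivative l) (at ts)" and l: "l < 0" and ch: "changes_C_to_R g ts \<epsilon>"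
  shows False
proof -
  have e: "\<epsilon> > 0" and g0: "g ts = 0" and pos: "\<forall>t\<in>{ts<..<ts + \<epsilon>}. g t > 0"
    using ch unfolding changes_C_to_R_def by auto
  obtain d where d: "d > 0" "\<forall>h>0. h < d \<longrightarrow> g ts > g (ts + h)"
    using DERIV_neg_dec_right[OF d l] by blast
  define h where "h = min d \<epsilon> / 2"
  have h: "h > 0" "h < d" "h < \<epsilon>" using d e by (auto simp: h_def)
  then have "g ts > g (ts + h)" using d by blast
  moreover have "g (ts + h) > 0" using pos h by auto
  ultimately show False using g0 by simp
qed

lemma curve_deriv:
  fixes m K c :: real
  assumes eu: "euler_solution m K 3 \<Omega> \<rho> u" and m: "m > 0" and cc: "c * c = 3 * K" and c0: "c \<noteq> 0"
  and pos: "\<forall>y\<in>\<Omega>. u y + c * \<rho> y > 0 \<and> u y - c * \<rho> y > 0"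
  and ch: "char_curve \<Omega> cf J r0 x" and cf: "\<forall>y\<in>\<Omega>. cf y = u y + c * \<rho> y"
  and sub: "{ts - \<epsilon><..<ts + \<epsilon>} \<subseteq> J" and eps: "\<epsilon> > 0"
  and geq: "\<forall>y\<in>\<Omega>. G y = AA m c \<rho> u y"
  and g0: "G (x ts, ts) = 0"
  shows "\<exists>k>0. ((\<lambda>t. G (x t, t)) has_real_derivative k * BB m c \<rho> u (x ts, ts)) (at ts)"
proof -
  define T where "T = {ts - \<epsilon><..<ts + \<epsilon>}"
  have T: "open T" "ts \<in> T" "T \<subseteq> J" using eps sub by (auto simp: T_def)
  have inO: "(x t, t) \<in> \<Omega>" if "t \<in> J" for t using ch that unfolding char_curve_def by blast
  have zO: "(x ts, ts) \<in> \<Omega>" using inO T by blast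
  have fpos: "\<forall>z\<in>\<Omega>. 0 < fst z"
    using eu unfolding euler_solution_def by blast
  have X: "x ts > 0" using fpos zO by force
  have dxJ: "(x has_real_derivative cf (x ts, ts)) (at ts within J)"
    using ch T unfolding char_curve_def by blast
  have "at ts within J = at ts" by (rule at_within_open_subset[OF T(2) T(1) T(3)])
  then have dx: "(x has_real_derivative (u (x ts, ts) + c * \<rho> (x ts, ts))) (at ts)"
    using dxJ cf zO by simp
  have W: "u (x ts, ts) + c * \<rho> (x ts, ts) > 0" and Z: "u (x ts, ts) - c * \<rho> (x ts, ts) > 0"
    using pos zO by auto
  have A0: "AA m c \<rho> u (x ts, ts) = 0" using geq zO g0 by simp
  note d = core[OF eu cc c0 zO _ _ dx A0] 
  have d': "((\<lambda>t. AA m c \<rho> u (x t, t)) has_real_derivative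
     m * (u (x ts, ts) - c * \<rho> (x ts, ts))^2 / (2 * x ts * (u (x ts, ts) + c * \<rho> (x ts, ts)))
       * BB m c \<rho> u (x ts, ts)) (at ts)"
    using d W Z by simp
  have d'': "((\<lambda>t. G (x t, t)) has_real_derivative
     m * (u (x ts, ts) - c * \<rho> (x ts, ts))^2 / (2 * x ts * (u (x ts, ts) + c * \<rho> (x ts, ts)))
       * BB m c \<rho> u (x ts, ts)) (at ts)"
  proof (rule has_field_derivative_transform_within_open[OF d' T(1) T(2)])
    fix t assume "t \<in> T"
    then have "(x t, t) \<in> \<Omega>" using inO T by blast
    then show "AA m c \<rho> u (x t, t) = G (x t, t)" using geq by simp
  qed
  have "m * (u (x ts, ts) - c * \<rho> (x ts, ts))^2 / (2 * x ts * (u (x ts, ts) + c * \<rho> (x ts, ts))) > 0"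
    using m W Z X by (intro divide_pos_pos mult_pos_pos) auto
  then show ?thesis using d'' by blast
qed



theorem mainTheorem2:
  fixes m K \<gamma> :: real and \<Omega> :: "(real \<times> real) set" and \<rho> u :: "real \<times> real \<Rightarrow> real"
  assumes "m \<in> {1, 2}" and "K > 0" and "\<gamma> = 3"
    and "euler_solution m K \<gamma> \<Omega> \<rho> u"
  shows
    \<comment> \<open>(i) 1-wave R: the 2-wave cannot change from R to C\<close>
    "(\<forall>J r0 \<psi> ts \<epsilon>. char_curve \<Omega> (c2 K \<gamma> \<rho> u) J r0 \<psi> \<and> {ts - \<epsilon><..<ts + \<epsilon>} \<subseteq> J
        \<and> beta m K \<gamma> \<rho> u (\<psi> ts, ts) > 0
        \<longrightarrow> \<not> changes_R_to_C (\<lambda>t. alpha m K \<gamma> \<rho> u (\<psi> t, t)) ts \<epsilon>)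
   \<and> \<comment> \<open>(i) 2-wave R: the 1-wave cannot change from R to C\<close>
    (\<forall>J r0 \<xi> ts \<epsilon>. char_curve \<Omega> (c1 K \<gamma> \<rho> u) J r0 \<xi> \<and> {ts - \<epsilon><..<ts + \<epsilon>} \<subseteq> J
        \<and> alpha m K \<gamma> \<rho> u (\<xi> ts, ts) > 0
        \<longrightarrow> \<not> changes_R_to_C (\<lambda>t. beta m K \<gamma> \<rho> u (\<xi> t, t)) ts \<epsilon>)
   \<and> \<comment> \<open>(ii) 1-wave C: the 2-wave cannot change from C to R\<close>
    (\<forall>J r0 \<psi> ts \<epsilon>. char_curve \<Omega> (c2 K \<gamma> \<rho> u) J r0 \<psi> \<and> {ts - \<epsilon><..<ts + \<epsilon>} \<subseteq> J
        \<and> beta m K \<gamma> \<rho> u (\<psi> ts, ts) < 0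
        \<longrightarrow> \<not> changes_C_to_R (\<lambda>t. alpha m K \<gamma> \<rho> u (\<psi> t, t)) ts \<epsilon>)
   \<and> \<comment> \<open>(ii) 2-wave C: the 1-wave cannot change from C to R\<close>
    (\<forall>J r0 \<xi> ts \<epsilon>. char_curve \<Omega> (c1 K \<gamma> \<rho> u) J r0 \<xi> \<and> {ts - \<epsilon><..<ts + \<epsilon>} \<subseteq> J
        \<and> alpha m K \<gamma> \<rho> u (\<xi> ts, ts) < 0
        \<longrightarrow> \<not> changes_C_to_R (\<lambda>t. beta m K \<gamma> \<rho> u (\<xi> t, t)) ts \<epsilon>)"
proof -
  have m: "m > 0" using assms(1) by auto
  have g3: "\<gamma> = 3" using assms(3) .
  have eu: "euler_solution m K 3 \<Omega> \<rho> u" using assms(3,4) by simp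
  define s where "s = sqrt (K * 3)"
  have s0: "s > 0" using assms(2) by (simp add: s_def)
  have ss: "s * s = 3 * K" and ss': "(- s) * (- s) = 3 * K" using assms(2) by (simp_all add: s_def)
  have s0': "s \<noteq> 0" "- s \<noteq> 0" using s0 by auto
  have cvals: "c1 K 3 \<rho> u y = u y + (- s) * \<rho> y" "c2 K 3 \<rho> u y = u y + s * \<rho> y" if "y \<in> \<Omega>" for y
    using hsp_eq[OF eu that] unfolding c1_def c2_def s_def by simp_all
  have reg: "0 < c1 K 3 \<rho> u y \<and> c1 K 3 \<rho> u y < c2 K 3 \<rho> u y" if "y \<in> \<Omega>" for y
    using eu that unfolding euler_solution_def by blast
  have pos: "\<forall>y\<in>\<Omega>. u y + s * \<rho> y > 0 \<and> u y - s * \<rho> y > 0"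
    using reg cvals by fastforce
  have pos': "\<forall>y\<in>\<Omega>. u y + (- s) * \<rho> y > 0 \<and> u y - (- s) * \<rho> y > 0"
    using reg cvals by fastforce
  have cf2: "\<forall>y\<in>\<Omega>. c2 K 3 \<rho> u y = u y + s * \<rho> y" using cvals by blast
  have cf1: "\<forall>y\<in>\<Omega>. c1 K 3 \<rho> u y = u y + (- s) * \<rho> y" using cvals by blast
  have eqs: "\<forall>y\<in>\<Omega>. alpha m K 3 \<rho> u y = AA m s \<rho> u y"
     "\<forall>y\<in>\<Omega>. beta m K 3 \<rho> u y = BB m s \<rho> u y"
     "\<forall>y\<in>\<Omega>. beta m K 3 \<rho> u y = AA m (- s) \<rho> u y"
     "\<forall>y\<in>\<Omega>. alpha m K 3 \<rho> u y = BB m (- s) \<rho> u y"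
    using alpha_beta_eq[OF eu] unfolding s_def by blast+
  have inO: "(x ts, ts) \<in> \<Omega>" if "char_curve \<Omega> cf J r0 x" "{ts - \<epsilon><..<ts + \<epsilon>} \<subseteq> J" "\<epsilon> > 0"
    for cf J r0 x ts \<epsilon>
  proof -
    have "ts \<in> J" using that(2,3) by auto
    then show ?thesis using that(1) unfolding char_curve_def by blast
  qed
  show ?thesis unfolding g3
  proof (intro conjI allI impI notI)
    fix J r0 \<psi> ts \<epsilon>
    assume H: "char_curve \<Omega> (c2 K 3 \<rho> u) J r0 \<psi> \<and> {ts - \<epsilon><..<ts + \<epsilon>} \<subseteq> J \<and> 0 < beta m K 3 \<rho> u (\<psi> ts, ts)"
      and ch: "changes_R_to_C (\<lambda>t. alpha m K 3 \<rho> u (\<psi> t, t)) ts \<epsilon>"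
    have e: "\<epsilon> > 0" and g0: "alpha m K 3 \<rho> u (\<psi> ts, ts) = 0" using ch unfolding changes_R_to_C_def by auto
    obtain k where k: "k > 0" and d: "((\<lambda>t. alpha m K 3 \<rho> u (\<psi> t, t)) has_real_derivative k * BB m s \<rho> u (\<psi> ts, ts)) (at ts)"
      using curve_deriv[where G="alpha m K 3 \<rho> u" and x=\<psi> and ts=ts and J=J and \<epsilon>=\<epsilon>, OF eu m ss s0'(1) pos _ cf2 _ e eqs(1) g0] H by blast
    have "BB m s \<rho> u (\<psi> ts, ts) > 0" using H eqs(2) inO[of _ J r0 \<psi> ts \<epsilon>] e by auto
    then show False using no_RC[OF d _ ch] k by simp
  next
    fix J r0 \<xi> ts \<epsilon>
    assume H: "char_curve \<Omega> (c1 K 3 \<rho> u) J r0 \<xi> \<and> {ts - \<epsilon><..<ts + \<epsilon>} \<subseteq> J \<and> 0 < alpha m K 3 \<rho> u (\<xi> ts, ts)"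
      and ch: "changes_R_to_C (\<lambda>t. beta m K 3 \<rho> u (\<xi> t, t)) ts \<epsilon>"
    have e: "\<epsilon> > 0" and g0: "beta m K 3 \<rho> u (\<xi> ts, ts) = 0" using ch unfolding changes_R_to_C_def by auto
    obtain k where k: "k > 0" and d: "((\<lambda>t. beta m K 3 \<rho> u (\<xi> t, t)) has_real_derivative k * BB m (- s) \<rho> u (\<xi> ts, ts)) (at ts)"
      using curve_deriv[where G="beta m K 3 \<rho> u" and x=\<xi> and ts=ts and J=J and \<epsilon>=\<epsilon>, OF eu m ss' s0'(2) pos' _ cf1 _ e eqs(3) g0] H by blast
    have "BB m (- s) \<rho> u (\<xi> ts, ts) > 0" using H eqs(4) inO[of _ J r0 \<xi> ts \<epsilon>] e by auto
    then show False using no_RC[OF d _ ch] k by simp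
  next
    fix J r0 \<psi> ts \<epsilon>
    assume H: "char_curve \<Omega> (c2 K 3 \<rho> u) J r0 \<psi> \<and> {ts - \<epsilon><..<ts + \<epsilon>} \<subseteq> J \<and> beta m K 3 \<rho> u (\<psi> ts, ts) < 0"
      and ch: "changes_C_to_R (\<lambda>t. alpha m K 3 \<rho> u (\<psi> t, t)) ts \<epsilon>"
    have e: "\<epsilon> > 0" and g0: "alpha m K 3 \<rho> u (\<psi> ts, ts) = 0" using ch unfolding changes_C_to_R_def by auto
    obtain k where k: "k > 0" and d: "((\<lambda>t. alpha m K 3 \<rho> u (\<psi> t, t)) has_real_derivative k * BB m s \<rho> u (\<psi> ts, ts)) (at ts)"
      using curve_deriv[where G="alpha m K 3 \<rho> u" and x=\<psi> and ts=ts and J=J and \<epsilon>=\<epsilon>, OF eu m ss s0'(1) pos _ cf2 _ e eqs(1) g0] H by blast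
    have "BB m s \<rho> u (\<psi> ts, ts) < 0" using H eqs(2) inO[of _ J r0 \<psi> ts \<epsilon>] e by auto
    then have "k * BB m s \<rho> u (\<psi> ts, ts) < 0" using k by (simp add: mult_pos_neg)
    then show False using no_CR[OF d _ ch] by simp
  next
    fix J r0 \<xi> ts \<epsilon>
    assume H: "char_curve \<Omega> (c1 K 3 \<rho> u) J r0 \<xi> \<and> {ts - \<epsilon><..<ts + \<epsilon>} \<subseteq> J \<and> alpha m K 3 \<rho> u (\<xi> ts, ts) < 0"
      and ch: "changes_C_to_R (\<lambda>t. beta m K 3 \<rho> u (\<xi> t, t)) ts \<epsilon>"
    have e: "\<epsilon> > 0" and g0: "beta m K 3 \<rho> u (\<xi> ts, ts) = 0" using ch unfolding changes_C_to_R_def by auto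
    obtain k where k: "k > 0" and d: "((\<lambda>t. beta m K 3 \<rho> u (\<xi> t, t)) has_real_derivative k * BB m (- s) \<rho> u (\<xi> ts, ts)) (at ts)"
      using curve_deriv[where G="beta m K 3 \<rho> u" and x=\<xi> and ts=ts and J=J and \<epsilon>=\<epsilon>, OF eu m ss' s0'(2) pos' _ cf1 _ e eqs(3) g0] H by blast
    have "BB m (- s) \<rho> u (\<xi> ts, ts) < 0" using H eqs(4) inO[of _ J r0 \<xi> ts \<epsilon>] e by auto
    then have "k * BB m (- s) \<rho> u (\<xi> ts, ts) < 0" using k by (simp add: mult_pos_neg)
    then show False using no_CR[OF d _ ch] by simp
  qed
qed

end
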